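(* For $O\in\mathbb{R}^2$ let $v$ be a uniform random point in $[0,1]^2$, $g_1(O):=\mathbb{E}(d(O,v))$, and $g_2(O):=\mathbb{E}\left(\min\{d(O,v),\tfrac34 g_1(O)\}\right)$. Then for all $O,O'\in\mathbb{R}^2$, $|g_2(O)-g_2(O')|\le d(O,O')$.
   Context: $d$ is Euclidean distance. *)

theory Defs
  imports "HOL-Probability.Probability"
begin

definition unit_sq_unif :: "(real^2) measure" where
  "unit_sq_unif = uniform_measure lborel (cbox 0 1)"

definition g1 :: "real^2 \<Rightarrow> real" where
  "g1 O' = (\<integral>v. dist O' v \<partial>unit_sq_unif)"

definition g2 :: "real^2 \<Rightarrow> real" where
  "g2 O' = (\<integral>v. min (dist O' v) (3/4 * g1 O') \<partial>unit_sq_unif)"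

end

theory Submission
  imports Defs
begin

lemma one_inner: "b \<in> Basis \<Longrightarrow> (1::real^2) \<bullet> b = 1"
  by (auto simp: Basis_vec_def inner_axis)

lemma ps: "prob_space unit_sq_unif"
  unfolding unit_sq_unif_def
proof (rule prob_space_uniform_measure)
  have "emeasure lborel (cbox (0::real^2) 1) = 1"
    by (simp add: emeasure_lborel_cbox_eq one_inner)
  then show "emeasure lborel (cbox (0::real^2) 1) \<noteq> 0" "emeasure lborel (cbox (0::real^2) 1) \<noteq> \<infinity>"
    by auto
qed

lemma int_dist: "integrable unit_sq_unif (\<lambda>v. dist P v)"
proof -
  interpret prob_space unit_sq_unif by (rule ps)
  obtain a where a: "\<And>x. x \<in> cbox (0::real^2) 1 \<Longrightarrow> norm x \<le> a"
    using bounded_cbox[of "0::real^2" 1] unfolding bounded_iff by blast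
  have "AE v in unit_sq_unif. norm (dist P v) \<le> norm P + a"
    unfolding unit_sq_unif_def
  proof (rule AE_uniform_measureI)
    show "cbox 0 1 \<in> sets lborel" by simp
    show "AE x in lborel. x \<in> cbox 0 1 \<longrightarrow> norm (dist P x) \<le> norm P + a"
    proof (rule AE_I2, rule impI)
      fix x :: "real^2" assume "x \<in> cbox 0 1"
      then have "norm x \<le> a" by (rule a)
      moreover have "dist P x \<le> norm P + norm x" by (simp add: dist_norm norm_triangle_ineq4)
      ultimately show "norm (dist P x) \<le> norm P + a" by simp
    qed
  qed
  moreover have "(\<lambda>v. dist P v) \<in> borel_measurable unit_sq_unif"
    unfolding unit_sq_unif_def by (simp add: borel_measurable_continuous_onI continuous_on_dist)
  ultimately show ?thesis by (rule integrable_const_bound)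
qed

lemma int_min: "integrable unit_sq_unif (\<lambda>v. min (dist P v) c)"
proof -
  interpret prob_space unit_sq_unif by (rule ps)
  show ?thesis by (intro integrable_min int_dist integrable_const)
qed

lemma diff_bound:
  fixes f g :: "real^2 \<Rightarrow> real" and d :: real
  assumes "integrable unit_sq_unif f" "integrable unit_sq_unif g"
    "\<And>v. \<bar>f v - g v\<bar> \<le> d"
  shows "\<bar>(\<integral>v. f v \<partial>unit_sq_unif) - (\<integral>v. g v \<partial>unit_sq_unif)\<bar> \<le> d"
proof -
  interpret prob_space unit_sq_unif by (rule ps)
  have "\<bar>(\<integral>v. f v \<partial>unit_sq_unif) - (\<integral>v. g v \<partial>unit_sq_unif)\<bar>
      = \<bar>\<integral>v. f v - g v \<partial>unit_sq_unif\<bar>"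
    using assms by simp
  also have "\<dots> \<le> (\<integral>v. \<bar>f v - g v\<bar> \<partial>unit_sq_unif)"
    by (rule integral_abs_bound)
  also have "\<dots> \<le> (\<integral>v. d \<partial>unit_sq_unif)"
    by (rule integral_mono) (use assms in auto)
  also have "\<dots> = d" by (simp add: prob_space)
  finally show ?thesis .
qed

lemma g1_lip: "\<bar>g1 P - g1 Q\<bar> \<le> dist P Q"
  unfolding g1_def
  apply (rule diff_bound[OF int_dist int_dist]) using dist_triangle2 dist_commute abs_le_iff by smt

theorem lemma20:
  fixes P Q :: "real^2"
  shows "\<bar>g2 P - g2 Q\<bar> \<le> dist P Q"
  unfolding g2_def
proof (rule diff_bound[OF int_min int_min])
  fix v
  have d: "\<bar>dist P v - dist Q v\<bar> \<le> dist P Q"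
    using dist_triangle2 dist_commute abs_le_iff by smt
  have t: "\<bar>3/4 * g1 P - 3/4 * g1 Q\<bar> \<le> dist P Q"
    using g1_lip[of P Q] zero_le_dist[of P Q] by linarith
  show "\<bar>min (dist P v) (3 / 4 * g1 P) - min (dist Q v) (3 / 4 * g1 Q)\<bar> \<le> dist P Q"
    using d t by (simp add: min_def abs_le_iff)
qed

end
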